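(* Let $P$ be an $n$-element poset written as $P=P_1+P_2+\cdots+P_k$ with each $P_i$ nonempty and not expressible as a disjoint sum of two nonempty posets. Suppose $|P_k|\ge|P_i|$ for all $i$, and that for some $0\le m\le k-1$ the components $P_1,\dots,P_m$ are singletons while none of $P_{m+1},\dots,P_{k-1}$ is a singleton. Then $\mathrm{ext}(P)\le \frac{n!}{n-m}$.
   Context: For a finite poset $P$, $\mathrm{ext}(P)$ denotes the number of linear extensions of $P$. The disjoint sum $P+Q$ of posets $P,Q$ is the poset on the disjoint union of their ground sets in which $x\le y$ iff $x,y$ lie in the same summand and are related there. *)

theory Defs
  imports Complex_Main
begin

text \<open>A finite poset is a carrier set A with a relation r satisfying partial_order_on A r
  (reflexive on A, transitive, antisymmetric, r contained in A times A).\<close>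

text \<open>Linear extensions: order-preserving bijections from A onto the positions 0..n-1
  (normalised to 0 outside A so that the set is finite).\<close>
definition linext :: "'a set \<Rightarrow> 'a rel \<Rightarrow> ('a \<Rightarrow> nat) set" where
  "linext A r = {f. bij_betw f A {0..<card A} \<and> (\<forall>x. x \<notin> A \<longrightarrow> f x = 0) \<and>
                   (\<forall>x\<in>A. \<forall>y\<in>A. (x, y) \<in> r \<longrightarrow> f x \<le> f y)}"

definition ext :: "'a set \<Rightarrow> 'a rel \<Rightarrow> nat" where
  "ext A r = card (linext A r)"

definition restr :: "'a rel \<Rightarrow> 'a set \<Rightarrow> 'a rel" where
  "restr r B = r \<inter> (B \<times> B)"

definition sum_decomposable :: "'a set \<Rightarrow> 'a rel \<Rightarrow> bool" where
  "sum_decomposable A r \<longleftrightarrow> (\<exists>B C. B \<noteq> {} \<and> C \<noteq> {} \<and> B \<inter> C = {} \<and> B \<union> C = A \<and>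
      (\<forall>x\<in>B. \<forall>y\<in>C. (x, y) \<notin> r \<and> (y, x) \<notin> r))"

text \<open>(A,r) = P 1 + ... + P k: the P i partition A and elements of different
  summands are incomparable (the order on each summand is the induced one).\<close>
definition is_disjoint_sum :: "'a set \<Rightarrow> 'a rel \<Rightarrow> nat \<Rightarrow> (nat \<Rightarrow> 'a set) \<Rightarrow> bool" where
  "is_disjoint_sum A r k P \<longleftrightarrow>
     A = (\<Union>i\<in>{1..k}. P i) \<and>
     (\<forall>i\<in>{1..k}. \<forall>j\<in>{1..k}. i \<noteq> j \<longrightarrow> P i \<inter> P j = {}) \<and>
     (\<forall>i\<in>{1..k}. \<forall>j\<in>{1..k}. i \<noteq> j \<longrightarrow> (\<forall>x\<in>P i. \<forall>y\<in>P j. (x, y) \<notin> r))"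

end

theory Submission imports Defs "HOL-Library.FuncSet" begin

lemma finite_linext:
  assumes "finite A" shows "finite (linext A r)"
proof -
  have "inj_on (\<lambda>f. restrict f A) (linext A r)"
  proof (rule inj_onI)
    fix f g assume "f \<in> linext A r" "g \<in> linext A r" "restrict f A = restrict g A"
    then show "f = g" unfolding linext_def
      by (auto simp: fun_eq_iff restrict_def split: if_splits) (metis)
  qed
  moreover have "(\<lambda>f. restrict f A) ` linext A r \<subseteq> PiE A (\<lambda>_. {0..<card A})"
    unfolding linext_def by (auto simp: bij_betw_def)
  moreover have "finite (PiE A (\<lambda>_. {0..<card A}))" using assms by (simp add: finite_PiE)
  ultimately show ?thesis by (meson finite_imageD finite_subset)
qed

lemma rank_lemma:
  fixes g :: "'a \<Rightarrow> nat"
  assumes "finite B" "inj_on g B"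
  defines "rk \<equiv> \<lambda>x. card {y\<in>B. g y < g x}"
  shows "bij_betw rk B {0..<card B}"
    and "\<And>x y. x \<in> B \<Longrightarrow> y \<in> B \<Longrightarrow> g x \<le> g y \<Longrightarrow> rk x \<le> rk y"
proof -
  show mono: "\<And>x y. x \<in> B \<Longrightarrow> y \<in> B \<Longrightarrow> g x \<le> g y \<Longrightarrow> rk x \<le> rk y"
    unfolding rk_def by (rule card_mono) (use assms in auto)
  have strict: "rk x < rk y" if "x \<in> B" "y \<in> B" "g x < g y" for x y
    unfolding rk_def
    by (rule psubset_card_mono) (use assms that in auto)
  have inj: "inj_on rk B"
  proof (rule inj_onI)
    fix x y assume "x \<in> B" "y \<in> B" "rk x = rk y"
    then show "x = y" using strict[of x y] strict[of y x] assms(2)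
      by (metis inj_on_eq_iff linorder_neqE_nat order_less_irrefl)
  qed
  have sub: "rk ` B \<subseteq> {0..<card B}"
  proof
    fix t assume "t \<in> rk ` B"
    then obtain x where x: "x \<in> B" "t = rk x" by auto
    have "{y\<in>B. g y < g x} \<subset> B" using x by auto
    then show "t \<in> {0..<card B}" using x assms(1) unfolding rk_def
      by (simp add: psubset_card_mono)
  qed
  have "card (rk ` B) = card B" using inj by (simp add: card_image)
  then have "rk ` B = {0..<card B}" using sub by (simp add: card_subset_eq)
  then show "bij_betw rk B {0..<card B}" using inj by (simp add: bij_betw_def)
qed


definition cmp :: "('a \<Rightarrow> nat) \<Rightarrow> 'a set \<Rightarrow> 'a \<Rightarrow> nat" where
  "cmp f B x = (if x \<in> B then card {y\<in>B. f y < f x} else 0)"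

lemma linext_inj: "f \<in> linext A r \<Longrightarrow> inj_on f A"
  unfolding linext_def bij_betw_def by auto

lemma comp_linext:
  assumes "finite A" "f \<in> linext A r" "B \<subseteq> A"
  shows "cmp f B \<in> linext B r"
proof -
  have fin: "finite B" using assms finite_subset by blast
  have inj: "inj_on f B" using linext_inj[OF assms(2)] assms(3) inj_on_subset by blast
  note R = rank_lemma[OF fin inj]
  have b: "bij_betw (cmp f B) B {0..<card B}"
    using R(1) by (rule bij_betw_cong[THEN iffD1, rotated]) (simp add: cmp_def)
  have m: "\<forall>x\<in>B. \<forall>y\<in>B. (x, y) \<in> r \<longrightarrow> cmp f B x \<le> cmp f B y"
    using R(2) assms(2,3) unfolding linext_def cmp_def by (auto simp: subset_iff)
  show ?thesis unfolding linext_def using b m by (auto simp: cmp_def)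
qed

lemma comp_rank:
  assumes "f \<in> linext A r" "D \<subseteq> A" "x \<in> D"
  shows "cmp f D x = card {s\<in>f ` D. s < f x}"
proof -
  have inj: "inj_on f {y\<in>D. f y < f x}"
    by (rule inj_on_subset[OF linext_inj[OF assms(1)]]) (use assms(2) in auto)
  have "f ` {y\<in>D. f y < f x} = {s\<in>f ` D. s < f x}" by auto
  then show ?thesis using card_image[OF inj] assms(3) by (simp add: cmp_def)
qed

lemma comp_determines:
  assumes "finite A" "f \<in> linext A r" "g \<in> linext A r" "D \<subseteq> A" "x \<in> D"
    "f ` D = g ` D" "cmp f D x = cmp g D x"
  shows "f x = g x"
proof -
  let ?S = "f ` D"
  have finS: "finite ?S" using assms(1,4) finite_subset by blast
  have "card {s\<in>?S. s < f x} = card {s\<in>?S. s < g x}"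
    using comp_rank[OF assms(2,4,5)] comp_rank[OF assms(3,4,5)] assms(6,7) by simp
  moreover have "f x \<in> ?S" "g x \<in> ?S" using assms(5,6) by auto
  moreover have "bij_betw (\<lambda>t. card {s\<in>?S. id s < id t}) ?S {0..<card ?S}"
    using rank_lemma(1)[OF finS inj_on_id] .
  then have "inj_on (\<lambda>t. card {s\<in>?S. s < t}) ?S" by (simp add: bij_betw_def)
  ultimately show ?thesis by (meson inj_onD)
qed

lemma ext_split:
  assumes "finite A" "A = B \<union> C" "B \<inter> C = {}"
  shows "ext A r \<le> (card A choose card B) * ext B r * ext C r"
proof -
  let ?n = "card A"
  define \<Phi> where "\<Phi> = (\<lambda>f. (f ` B, cmp f B, cmp f C))"
  let ?T = "{S. S \<subseteq> {0..<?n} \<and> card S = card B} \<times> linext B r \<times> linext C r"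
  have sub: "\<Phi> ` linext A r \<subseteq> ?T"
  proof
    fix t assume "t \<in> \<Phi> ` linext A r"
    then obtain f where f: "f \<in> linext A r" "t = \<Phi> f" by auto
    have "f ` B \<subseteq> {0..<?n}" using f(1) assms(2) unfolding linext_def bij_betw_def by auto
    moreover have "card (f ` B) = card B"
      using linext_inj[OF f(1)] assms(2) by (meson card_image inj_on_subset sup_ge1)
    ultimately show "t \<in> ?T" using f comp_linext[OF assms(1) f(1)] assms(2)
      by (auto simp: \<Phi>_def)
  qed
  have inj: "inj_on \<Phi> (linext A r)"
  proof (rule inj_onI)
    fix f g assume f: "f \<in> linext A r" and g: "g \<in> linext A r" and e: "\<Phi> f = \<Phi> g"
    have fB: "f ` B = g ` B" and cB: "cmp f B = cmp g B" and cC: "cmp f C = cmp g C"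
      using e by (auto simp: \<Phi>_def)
    have imA: "f ` A = {0..<?n}" "g ` A = {0..<?n}" using f g unfolding linext_def bij_betw_def by auto
    have "f ` C = f ` A - f ` B"
      using linext_inj[OF f] assms(2,3) by (auto simp: inj_on_def)
    moreover have "g ` C = g ` A - g ` B"
      using linext_inj[OF g] assms(2,3) by (auto simp: inj_on_def)
    ultimately have fC: "f ` C = g ` C" using imA fB by simp
    show "f = g"
    proof
      fix x
      show "f x = g x"
      proof (cases "x \<in> A")
        case False then show ?thesis using f g unfolding linext_def by auto
      next
        case True
        then consider "x \<in> B" | "x \<in> C" using assms(2) by auto
        then show ?thesis
        proof cases
          case 1 then show ?thesis using comp_determines[OF assms(1) f g _ 1 fB] cB assms(2) by auto
        next
          case 2 then show ?thesis using comp_determines[OF assms(1) f g _ 2 fC] cC assms(2) by auto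
        qed
      qed
    qed
  qed
  have finT: "finite ?T"
    using assms finite_linext[of B r] finite_linext[of C r] by auto
  have "ext A r = card (\<Phi> ` linext A r)" unfolding ext_def using inj by (simp add: card_image)
  also have "\<dots> \<le> card ?T" using sub finT by (rule card_mono[rotated])
  also have "\<dots> = (?n choose card B) * ext B r * ext C r"
    by (simp add: card_cartesian_product n_subsets ext_def)
  finally show ?thesis .
qed


lemma ext_singleton: "ext {x} r \<le> 1"
proof -
  have S: "linext {x} r \<subseteq> {\<lambda>_. 0}"
    unfolding linext_def bij_betw_def by (auto simp: fun_eq_iff) (metis)
  show ?thesis unfolding ext_def using card_mono[OF _ S] by simp
qed

lemma ext_mono_rel: "finite A \<Longrightarrow> ext A r \<le> ext A {}"
  unfolding ext_def by (rule card_mono[OF finite_linext]) (auto simp: linext_def)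

lemma ext_empty_rel: "finite A \<Longrightarrow> ext A {} \<le> fact (card A)"
proof (induction A rule: finite_induct)
  case empty
  have S: "linext {} {} \<subseteq> {\<lambda>_. 0}" unfolding linext_def by (auto simp: fun_eq_iff)
  have "ext {} {} \<le> 1" unfolding ext_def using card_mono[OF _ S] by simp
  then show ?case by simp
next
  case (insert x F)
  have "ext (insert x F) {} \<le> (card (insert x F) choose card {x}) * ext {x} {} * ext F {}"
    by (rule ext_split) (use insert in auto)
  also have "\<dots> \<le> (card F + 1) * 1 * fact (card F)"
    using insert ext_singleton[of x "{}"] by (intro mult_mono) auto
  also have "\<dots> = fact (card (insert x F))" using insert by simp
  finally show ?case .
qed


lemma mod_lt2: "(t::nat) < 2 * N \<Longrightarrow> t mod N = (if t < N then t else t - N)"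
  by (simp add: le_mod_geq)

lemma rot_bij:
  fixes c N :: nat
  assumes "c < N" shows "bij_betw (\<lambda>t. (t + c) mod N) {0..<N} {0..<N}"
proof -
  have inj: "inj_on (\<lambda>t. (t + c) mod N) {0..<N}"
  proof (rule inj_onI)
    fix s t assume "s \<in> {0..<N}" "t \<in> {0..<N}" "(s + c) mod N = (t + c) mod N"
    then show "s = t" using assms mod_lt2[of "s+c" N] mod_lt2[of "t+c" N]
      by (auto split: if_splits)
  qed
  have "(\<lambda>t. (t + c) mod N) ` {0..<N} \<subseteq> {0..<N}" using assms by auto
  then have "(\<lambda>t. (t + c) mod N) ` {0..<N} = {0..<N}" using inj by (simp add: endo_inj_surj)
  then show ?thesis using inj by (simp add: bij_betw_def)
qed

definition indec :: "'a set \<Rightarrow> 'a rel \<Rightarrow> bool" where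
  "indec B r \<longleftrightarrow> (\<forall>X Y. X \<noteq> {} \<longrightarrow> Y \<noteq> {} \<longrightarrow> X \<inter> Y = {} \<longrightarrow> X \<union> Y = B \<longrightarrow>
      (\<exists>x\<in>X. \<exists>y\<in>Y. (x, y) \<in> r \<or> (y, x) \<in> r))"

lemma cyc_key:
  assumes "indec B r" "f \<in> linext B r" "g \<in> linext B r" "card B = N"
    "c < N" "d < N" "d \<le> c" "\<forall>x\<in>B. (f x + c) mod N = (g x + d) mod N"
  shows "c = d"
proof (rule ccontr)
  assume ne: "c \<noteq> d"
  have fb: "bij_betw f B {0..<N}" and gb: "bij_betw g B {0..<N}" using assms(2,3,4) unfolding linext_def by auto
  have fr: "\<And>x y. x \<in> B \<Longrightarrow> y \<in> B \<Longrightarrow> (x,y) \<in> r \<Longrightarrow> f x \<le> f y"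
   and gr: "\<And>x y. x \<in> B \<Longrightarrow> y \<in> B \<Longrightarrow> (x,y) \<in> r \<Longrightarrow> g x \<le> g y"
    using assms(2,3) unfolding linext_def by auto
  have fl: "x \<in> B \<Longrightarrow> f x < N" for x using fb by (auto simp: bij_betw_def)
  have gl: "x \<in> B \<Longrightarrow> g x < N" for x using gb by (auto simp: bij_betw_def)
  have gx: "g x = (if f x + (c - d) < N then f x + (c - d) else f x + (c - d) - N)" if "x \<in> B" for x
  proof -
    have e: "(f x + c) mod N = (g x + d) mod N" using assms(8) that by auto
    show ?thesis using e fl[OF that] gl[OF that] assms(5,6,7)
      mod_lt2[of "f x + c" N] mod_lt2[of "g x + d" N] by (auto split: if_splits)
  qed
  define X where "X = {x\<in>B. f x + (c - d) \<ge> N}"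
  define Y where "Y = {x\<in>B. f x + (c - d) < N}"
  have "N - 1 \<in> f ` B" "0 \<in> f ` B" using fb assms(5) by (auto simp: bij_betw_def)
  then obtain x0 y0 where "x0 \<in> B" "f x0 = N - 1" "y0 \<in> B" "f y0 = 0" by (metis imageE)
  then have "x0 \<in> X" "y0 \<in> Y" using ne assms(5,7) by (auto simp: X_def Y_def)
  then have "X \<noteq> {}" "Y \<noteq> {}" by auto
  moreover have "X \<inter> Y = {}" "X \<union> Y = B" by (auto simp: X_def Y_def)
  ultimately obtain x y where xy: "x \<in> X" "y \<in> Y" "(x, y) \<in> r \<or> (y, x) \<in> r"
    using assms(1) unfolding indec_def by blast
  have xB: "x \<in> B" "y \<in> B" using xy by (auto simp: X_def Y_def)
  show False using xy(3)
  proof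
    assume "(x, y) \<in> r"
    then have "f x \<le> f y" using fr xB by auto
    then show False using xy by (auto simp: X_def Y_def)
  next
    assume "(y, x) \<in> r"
    then have "g y \<le> g x" using gr xB by auto
    then show False using xy gx[OF xB(1)] gx[OF xB(2)] fl[OF xB(1)] by (auto simp: X_def Y_def)
  qed
qed

lemma cyc_same:
  assumes "f \<in> linext B r" "g \<in> linext B r" "card B = N"
    "c < N" "\<forall>x\<in>B. (f x + c) mod N = (g x + c) mod N"
  shows "f = g"
proof
  fix x
  show "f x = g x"
  proof (cases "x \<in> B")
    case False then show ?thesis using assms(1,2) unfolding linext_def by auto
  next
    case True
    have "f x < N" "g x < N" using assms(1,2,3) True unfolding linext_def bij_betw_def by auto
    then show ?thesis using assms(4) assms(5) True mod_lt2[of "f x + c" N] mod_lt2[of "g x + c" N]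
      by (auto split: if_splits)
  qed
qed

lemma ext_indec:
  assumes "finite B" "B \<noteq> {}" "indec B r"
  shows "ext B r * card B \<le> fact (card B)"
proof -
  define N where "N = card B"
  define \<Psi> where "\<Psi> = (\<lambda>(f, c). (\<lambda>x. if x \<in> B then (f x + c) mod N else (0::nat)))"
  have sub: "\<Psi> ` (linext B r \<times> {0..<N}) \<subseteq> linext B {}"
  proof
    fix h assume "h \<in> \<Psi> ` (linext B r \<times> {0..<N})"
    then obtain f c where fc: "f \<in> linext B r" "c < N" "h = \<Psi> (f, c)" by auto
    have fb: "bij_betw f B {0..<N}" using fc unfolding linext_def N_def by auto
    have "bij_betw ((\<lambda>t. (t + c) mod N) \<circ> f) B {0..<N}"
      using bij_betw_trans[OF fb rot_bij[OF fc(2)]] .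
    then have "bij_betw h B {0..<N}"
      by (rule bij_betw_cong[THEN iffD1, rotated]) (simp add: fc(3) \<Psi>_def)
    then show "h \<in> linext B {}" unfolding linext_def N_def by (simp add: fc(3) \<Psi>_def)
  qed
  have inj: "inj_on \<Psi> (linext B r \<times> {0..<N})"
  proof (rule inj_onI, clarify)
    fix f c g d assume f: "f \<in> linext B r" and c: "c \<in> {0..<N}" and g: "g \<in> linext B r"
      and d: "d \<in> {0..<N}" and e: "\<Psi> (f, c) = \<Psi> (g, d)"
    have eq: "\<forall>x\<in>B. (f x + c) mod N = (g x + d) mod N"
      using e unfolding \<Psi>_def by (auto simp: fun_eq_iff split: if_splits)
    have cd: "c = d"
    proof (cases "d \<le> c")
      case True
      show ?thesis by (rule cyc_key[OF assms(3) f g N_def[symmetric]]) (use c d eq True in auto)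
    next
      case False
      have "d = c" by (rule cyc_key[OF assms(3) g f N_def[symmetric]]) (use c d eq False in auto)
      then show ?thesis by simp
    qed
    then show "f = g \<and> c = d" using cyc_same[OF f g N_def[symmetric]] c eq by auto
  qed
  have "ext B r * N = card (linext B r \<times> {0..<N})"
    by (simp add: ext_def card_cartesian_product)
  also have "\<dots> = card (\<Psi> ` (linext B r \<times> {0..<N}))" using inj by (simp add: card_image)
  also have "\<dots> \<le> ext B {}" unfolding ext_def
    by (rule card_mono[OF finite_linext[OF assms(1)] sub])
  also have "\<dots> \<le> fact N" using ext_empty_rel[OF assms(1)] N_def by simp
  finally show ?thesis by (simp add: N_def)
qed


lemma ext_combine:
  assumes "finite B" "finite C" "B \<inter> C = {}" "card B \<ge> 2" "card C \<ge> 2"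
    "ext B r * card B \<le> fact (card B)" "ext C r * card C \<le> fact (card C)"
  shows "ext (B \<union> C) r * card (B \<union> C) \<le> fact (card (B \<union> C))"
proof -
  define a where "a = card B"
  define b where "b = card C"
  define E where "E = ext (B \<union> C) r"
  have cU: "card (B \<union> C) = a + b" using assms by (simp add: card_Un_disjoint a_def b_def)
  have E: "E \<le> ((a + b) choose a) * ext B r * ext C r"
    unfolding E_def a_def using ext_split[of "B \<union> C" B C r] assms cU by (simp add: a_def)
  have "E * a * b \<le> ((a + b) choose a) * (ext B r * a) * (ext C r * b)"
    using mult_right_mono[OF E, of "a * b"] by (simp add: algebra_simps)
  also have "\<dots> \<le> ((a + b) choose a) * fact a * fact b"
    using assms(6,7) unfolding a_def b_def by (intro mult_mono) auto
  also have "\<dots> = fact (a + b)" using binomial_fact_lemma[of a "a + b"] by (simp add: algebra_simps)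
  finally have 1: "E * a * b \<le> fact (a + b)" .
  have "a * 2 \<le> a * b" "2 * b \<le> a * b" using assms(4,5) unfolding a_def b_def by simp_all
  then have "a + b \<le> a * b" by linarith
  then have 2: "E * (a + b) \<le> E * (a * b)" by (rule mult_le_mono2)
  have "E * (a + b) \<le> fact (a + b)" using order_trans[OF 2] 1 by (simp add: mult.assoc)
  then show ?thesis using cU E_def by simp
qed

lemma indec_of: "\<not> sum_decomposable B (restr r B) \<Longrightarrow> indec B r"
  unfolding indec_def sum_decomposable_def restr_def by blast

theorem lemma6p2:
  fixes A :: "'a set" and r :: "'a rel" and P :: "nat \<Rightarrow> 'a set" and n k m :: nat
  assumes "finite A" and "partial_order_on A r" and "card A = n"
    and "k \<ge> 1"
    and "is_disjoint_sum A r k P"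
    and "\<forall>i\<in>{1..k}. P i \<noteq> {} \<and> \<not> sum_decomposable (P i) (restr r (P i))"
    and "\<forall>i\<in>{1..k}. card (P i) \<le> card (P k)"
    and "m \<le> k - 1"
    and "\<forall>i\<in>{1..m}. card (P i) = 1"
    and "\<forall>i\<in>{m+1..k-1}. card (P i) \<noteq> 1"
  shows "real (ext A r) \<le> fact n / real (n - m)"
proof -
  have hA: "A = (\<Union>i\<in>{1..k}. P i)"
    and disj: "\<forall>i\<in>{1..k}. \<forall>j\<in>{1..k}. i \<noteq> j \<longrightarrow> P i \<inter> P j = {}"
    using assms(5) unfolding is_disjoint_sum_def by auto
  have finP: "finite (P i)" if "i \<in> {1..k}" for i
    using assms(1) hA that by (meson UN_I finite_subset subsetI)
  define R where "R j = (\<Union>i\<in>{j..k}. P i)" for j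
  have Rlem: "ext (R j) r * card (R j) \<le> fact (card (R j))" if "m + 1 \<le> j" "j \<le> k" for j
    using that
  proof (induction "k - j" arbitrary: j)
    case 0
    then have jk: "j = k" by simp
    have "R j = P k" using jk by (simp add: R_def)
    moreover have "k \<in> {1..k}" using assms(4) by simp
    ultimately show ?case using ext_indec[OF finP] assms(6) indec_of by metis
  next
    case (Suc d)
    then have jk: "j < k" by simp
    have j1: "j \<in> {1..k}" using Suc by simp
    have RU: "R j = P j \<union> R (j + 1)" unfolding R_def
    proof -
      have "{j..k} = insert j {j+1..k}" using jk by auto
      then show "(\<Union>i\<in>{j..k}. P i) = P j \<union> (\<Union>i\<in>{j + 1..k}. P i)" by simp
    qed
    have dj: "P j \<inter> R (j + 1) = {}"
    proof -
      have "P j \<inter> P i = {}" if "i \<in> {j+1..k}" for i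
      proof -
        have "i \<in> {1..k}" "i \<noteq> j" using that j1 by auto
        then show ?thesis using disj j1 by blast
      qed
      then show ?thesis unfolding R_def by blast
    qed
    have finR: "finite (R (j + 1))" unfolding R_def using finP by auto
    have cj: "card (P j) \<ge> 2"
    proof -
      have "card (P j) \<noteq> 1" using assms(10) Suc jk by auto
      moreover have "card (P j) \<noteq> 0" using finP[OF j1] assms(6) j1 by auto
      ultimately show ?thesis by linarith
    qed
    have "card (P k) \<le> card (R (j + 1))"
      unfolding R_def by (rule card_mono[OF finR[unfolded R_def]]) (use jk in force)
    moreover have "card (P j) \<le> card (P k)" using assms(7) j1 by blast
    ultimately have cR: "card (R (j + 1)) \<ge> 2" using cj by linarith
    have IH: "ext (R (j+1)) r * card (R (j+1)) \<le> fact (card (R (j+1)))"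
      using Suc by auto
    have Pj: "ext (P j) r * card (P j) \<le> fact (card (P j))"
      using ext_indec[OF finP[OF j1]] assms(6) indec_of j1 by metis
    show ?case unfolding RU using ext_combine[OF finP[OF j1] finR dj cj cR Pj IH] .
  qed
  define S where "S = (\<Union>i\<in>{1..m}. P i)"
  define Q where "Q = R (m + 1)"
  have mk: "m < k" using assms(4,8) by simp
  have split: "{1..k} = {1..m} \<union> {m+1..k}" using mk by auto
  have AU: "A = S \<union> Q" unfolding S_def Q_def R_def hA split by (rule UN_Un)
  have SQ: "S \<inter> Q = {}"
  proof -
    have "P i \<inter> P j = {}" if "i \<in> {1..m}" "j \<in> {m+1..k}" for i j
    proof -
      have "i \<in> {1..k}" "j \<in> {1..k}" "i \<noteq> j" using that mk by auto
      then show ?thesis using disj by blast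
    qed
    then show ?thesis unfolding S_def Q_def R_def by blast
  qed
  have finS: "finite S" and finQ: "finite Q" using AU assms(1) by auto
  have cS: "card S = m"
  proof -
    have "card S = (\<Sum>i\<in>{1..m}. card (P i))" unfolding S_def
    proof (rule card_UN_disjoint)
      show "\<forall>i\<in>{1..m}. finite (P i)" using finP mk by auto
      show "\<forall>i\<in>{1..m}. \<forall>j\<in>{1..m}. i \<noteq> j \<longrightarrow> P i \<inter> P j = {}"
        using disj mk by auto
    qed simp
    also have "\<dots> = m" using assms(9) by simp
    finally show ?thesis .
  qed
  have cA: "n = m + card Q" using assms(3) AU SQ finS finQ cS by (simp add: card_Un_disjoint)
  have "P k \<subseteq> Q" unfolding Q_def R_def using mk by force
  moreover have "P k \<noteq> {}" using assms(4,6) by auto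
  ultimately have "Q \<noteq> {}" by blast
  then have "card Q \<noteq> 0" using finQ by simp
  then have qpos: "n - m > 0" using cA by simp
  have e1: "ext A r \<le> (n choose m) * ext S r * ext Q r"
    using ext_split[OF assms(1) AU SQ] assms(3) cS by simp
  have e2: "ext S r \<le> fact m" using order_trans[OF ext_mono_rel[OF finS, of r] ext_empty_rel[OF finS]] cS by simp
  have e3: "ext Q r * (n - m) \<le> fact (n - m)" using Rlem[of "m+1"] mk cA unfolding Q_def by simp
  have "ext A r * (n - m) \<le> (n choose m) * ext S r * ext Q r * (n - m)"
    using e1 by (rule mult_right_mono) simp
  also have "\<dots> = (n choose m) * ext S r * (ext Q r * (n - m))" by (simp only: mult.assoc)
  also have "\<dots> \<le> (n choose m) * fact m * fact (n - m)"
    using e2 e3 by (intro mult_mono) auto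
  also have "\<dots> = fact n" using binomial_fact_lemma[of m n] cA by (simp add: algebra_simps)
  finally have "ext A r * (n - m) \<le> fact n" .
  then have "real (ext A r) * real (n - m) \<le> fact n"
    by (metis of_nat_fact of_nat_le_iff of_nat_mult)
  then show ?thesis using qpos by (simp add: le_divide_eq)
qed

end
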